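(* Assume the following. (A1) $D$ is a real vector space; $M(\cdot,\cdot)$, $N(\cdot,\cdot)$ are symmetric bilinear forms on $D$, $M$ positive definite. (A2) There is a sequence $(\lambda_i,\varphi_i)_{i\in\mathbb N}\subset\mathbb R\times D$ with $\lambda_1\le\lambda_2\le\cdots$, $M(\varphi_i,v)=\lambda_iN(\varphi_i,v)$ for all $v\in D$, $M(\varphi_i,\varphi_j)=\delta_{ij}$, and $N(v,v)=\sum_{i=1}^\infty\lambda_i|N(v,\varphi_i)|^2$ for all $v\in D$. (A3) $X$ is a real vector space, $b_G$ a symmetric positive semidefinite bilinear form on $X$, and $T:D\to X$ linear with $b_G(Tu,Tv)=M(u,v)$ for all $u,v\in D$. (A4) $v_1,\dots,v_n\in D$ and $w_1,\dots,w_n\in X$ satisfy $b_G(w_i,Tv)=N(v_i,v)$ for all $v\in D$, $i=1,\dots,n$. (A5) $\rho>0$; with $A_0=(M(v_i,v_j))$, $A_1=(N(v_i,v_j))$, $A_2=(b_G(w_i,w_j))$, $A:=A_0-\rho A_1$, $B:=A_0-2\rho A_1+\rho^2A_2$, the matrix $B$ is positive definite; $\nu_1\le\cdots\le\nu_n$ are the eigenvalues of $Az=\nu Bz$ and $q$ is the number of negative ones. Suppose moreover $\rho\le\lambda_{m+1}$ for some integer $m\ge n$. Then $$\lambda_{m+1-k}\ \ge\ \rho-\frac{\rho}{1-\nu_k}\qquad(1\le k\le q).$$ In particular, if $A_1$ is positive definite and $\rho>\Lambda_n$, where $\Lambda_n$ is the largest eigenvalue of $A_0x=\Lambda A_1x$,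 then $\nu_n<0$, i.e. $q=n$, and the bound holds for all $1\le k\le n$. *)

theory Defs
  imports Main "Jordan_Normal_Form.Determinant"
begin

definition bilinear_form :: "('a::real_vector \<Rightarrow> 'a \<Rightarrow> real) \<Rightarrow> bool" where
  "bilinear_form B \<longleftrightarrow> (\<forall>y. linear (\<lambda>x. B x y)) \<and> (\<forall>x. linear (\<lambda>y. B x y))"

definition symmetric_form :: "('a \<Rightarrow> 'a \<Rightarrow> real) \<Rightarrow> bool" where
  "symmetric_form B \<longleftrightarrow> (\<forall>x y. B x y = B y x)"

definition pos_def_mat :: "nat \<Rightarrow> real mat \<Rightarrow> bool" where
  "pos_def_mat n C \<longleftrightarrow> C \<in> carrier_mat n n \<and> transpose_mat C = C \<and>
     (\<forall>x \<in> carrier_vec n. x \<noteq> 0\<^sub>v n \<longrightarrow> 0 < x \<bullet> (C *\<^sub>v x))"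

text \<open>\<open>mu 1 \<le> ... \<le> mu n\<close> are the eigenvalues (with algebraic multiplicity) of the
  generalized eigenproblem \<open>P z = t Q z\<close>, i.e. the roots of \<open>det (P - t Q)\<close>:
  \<open>det (P - t Q) = det Q * \<Prod>k=1..n. (mu k - t)\<close> for all real t.\<close>
definition gen_eigenvalues_sorted :: "nat \<Rightarrow> real mat \<Rightarrow> real mat \<Rightarrow> (nat \<Rightarrow> real) \<Rightarrow> bool" where
  "gen_eigenvalues_sorted n P Q mu \<longleftrightarrow>
     (\<forall>k \<in> {1..<n}. mu k \<le> mu (Suc k)) \<and>
     (\<forall>t::real. det (P - t \<cdot>\<^sub>m Q) = det Q * (\<Prod>k\<in>{1..n}. mu k - t))"

end

theory Submission
  imports Defs "Jordan_Normal_Form.Schur_Decomposition"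
begin

definition bf :: "(nat \<Rightarrow> nat \<Rightarrow> real) \<Rightarrow> nat \<Rightarrow> (nat \<Rightarrow> real) \<Rightarrow> (nat \<Rightarrow> real) \<Rightarrow> real" where
  "bf C n x y = (\<Sum>i<n. \<Sum>j<n. x i * C i j * y j)"

lemma bf_sum_left: "finite L \<Longrightarrow> bf C n (\<lambda>r. \<Sum>l\<in>L. a l * e l r) y = (\<Sum>l\<in>L. a l * bf C n (e l) y)"
  unfolding bf_def
  by (simp add: sum_distrib_left sum_distrib_right mult.assoc mult.left_commute sum.swap[of _ L])

lemma bf_sum_right: "finite L \<Longrightarrow> bf C n y (\<lambda>r. \<Sum>l\<in>L. a l * e l r) = (\<Sum>l\<in>L. a l * bf C n y (e l))"
  unfolding bf_def
  by (simp add: sum_distrib_left sum_distrib_right mult.assoc mult.left_commute sum.swap[of _ L])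

lemma bf_diff_left: "bf C n (\<lambda>r. x r - y r) z = bf C n x z - bf C n y z"
  unfolding bf_def by (simp add: algebra_simps sum_subtractf)

lemma bf_diff_right: "bf C n z (\<lambda>r. x r - y r) = bf C n z x - bf C n z y"
  unfolding bf_def by (simp add: algebra_simps sum_subtractf)

lemma bf_sym: "\<forall>i<n. \<forall>j<n. C i j = C j i \<Longrightarrow> bf C n x y = bf C n y x"
  unfolding bf_def
  by (subst sum.swap) (rule sum.cong[OF refl], rule sum.cong[OF refl], simp)

lemma bf_cong_left: "\<forall>r<n. x r = x' r \<Longrightarrow> bf C n x y = bf C n x' y"
  unfolding bf_def by simp

lemma sum_single:
  assumes "finite L" "l \<in> L" "\<forall>l'\<in>L. l' \<noteq> l \<longrightarrow> f l' = 0"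
  shows "sum f L = f l"
proof -
  have "sum f L = f l + sum f (L - {l})" using assms by (simp add: sum.remove)
  also have "sum f (L - {l}) = 0" using assms by (intro sum.neutral) auto
  finally show ?thesis by simp
qed

definition GSinv :: "nat \<Rightarrow> (nat \<Rightarrow> nat \<Rightarrow> real) \<Rightarrow> (nat \<Rightarrow> nat \<Rightarrow> real) \<Rightarrow> (nat \<Rightarrow> nat \<Rightarrow> real)
   \<Rightarrow> (nat \<Rightarrow> nat \<Rightarrow> real) \<Rightarrow> nat \<Rightarrow> (nat \<Rightarrow> nat \<Rightarrow> real) \<Rightarrow> bool" where
  "GSinv n C D p U j e \<longleftrightarrow>
    (\<forall>l<j. \<forall>l'<j. l \<noteq> l' \<longrightarrow> bf D n (e l) (e l') = 0) \<and>
    (\<forall>l<j. bf D n (e l) (e l) > 0) \<and>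
    (\<forall>l<j. \<forall>y. bf C n (e l) y = U l l * bf D n (e l) y) \<and>
    (\<forall>i<j. \<exists>c. (\<forall>l>i. c l = 0) \<and> (\<forall>r. p i r = (\<Sum>l<j. c l * e l r))) \<and>
    (\<forall>l<j. \<exists>x. x l = 1 \<and> (\<forall>i>l. x i = 0) \<and> (\<forall>r. e l r = (\<Sum>i<n. x i * p i r)))"

lemma GS_step:
  assumes Csym: "\<forall>i<n. \<forall>j<n. C i j = C j i"
    and Dsym: "\<forall>i<n. \<forall>j<n. D i j = D j i"
    and Dpos: "\<forall>x. (\<exists>r<n. x r \<noteq> 0) \<longrightarrow> bf D n x x > 0"
    and hAP: "\<forall>j<n. \<forall>y. bf C n (p j) y = (\<Sum>i\<le>j. U i j * bf D n (p i) y)"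
    and hind: "\<forall>x. (\<forall>r<n. (\<Sum>i<n. x i * p i r) = 0) \<longrightarrow> (\<forall>i<n. x i = 0)"
    and jn: "j < n"
    and inv: "GSinv n C D p U j e"
  shows "\<exists>e'. GSinv n C D p U (Suc j) e'"
proof -
  note I = inv[unfolded GSinv_def]
  have O: "\<forall>l<j. \<forall>l'<j. l \<noteq> l' \<longrightarrow> bf D n (e l) (e l') = 0" using I by (elim conjE) assumption
  have P: "\<forall>l<j. bf D n (e l) (e l) > 0" using I by (elim conjE) assumption
  have E: "\<forall>l<j. \<forall>y. bf C n (e l) y = U l l * bf D n (e l) y" using I by (elim conjE) assumption
  have S: "\<forall>i<j. \<exists>c. (\<forall>l>i. c l = 0) \<and> (\<forall>r. p i r = (\<Sum>l<j. c l * e l r))" using I by (elim conjE) assumption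
  have X: "\<forall>l<j. \<exists>x. x l = 1 \<and> (\<forall>i>l. x i = 0) \<and> (\<forall>r. e l r = (\<Sum>i<n. x i * p i r))" using I by (elim conjE) assumption
  have "\<forall>i. \<exists>c. i < j \<longrightarrow> (\<forall>l>i. c l = 0) \<and> (\<forall>r. p i r = (\<Sum>l<j. c l * e l r))" using S by auto
  from choice[OF this] obtain cs where cs: "\<forall>i<j. (\<forall>l>i. cs i l = 0) \<and> (\<forall>r. p i r = (\<Sum>l<j. cs i l * e l r))"
    by blast
  have "\<forall>l. \<exists>x. l < j \<longrightarrow> x l = 1 \<and> (\<forall>i>l. x i = 0) \<and> (\<forall>r. e l r = (\<Sum>i<n. x i * p i r))" using X by auto
  from choice[OF this] obtain xs where xs: "\<forall>l<j. xs l l = 1 \<and> (\<forall>i>l. xs l i = 0) \<and> (\<forall>r. e l r = (\<Sum>i<n. xs l i * p i r))"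
    by blast
  define \<alpha> where "\<alpha> l = bf D n (p j) (e l) / bf D n (e l) (e l)" for l
  define ej where "ej r = p j r - (\<Sum>l<j. \<alpha> l * e l r)" for r
  define e' where "e' = e(j := ej)"
  have e'_lt: "e' l = e l" if "l < j" for l using that unfolding e'_def by auto
  have e'_j: "e' j = ej" unfolding e'_def by auto
  have ej_fun: "ej = (\<lambda>r. p j r - (\<Sum>l<j. \<alpha> l * e l r))" unfolding ej_def by auto
  have sumD: "(\<Sum>l'<j. \<alpha> l' * bf D n (e l') (e l)) = \<alpha> l * bf D n (e l) (e l)" if l: "l < j" for l
    by (rule sum_single) (use l O in auto)
  have ortho1: "bf D n ej (e l) = 0" if l: "l < j" for l
  proof -
    have "bf D n ej (e l) = bf D n (p j) (e l) - (\<Sum>l'<j. \<alpha> l' * bf D n (e l') (e l))"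
      unfolding ej_fun by (simp add: bf_diff_left bf_sum_left)
    also have "\<dots> = 0" by (subst sumD[OF l]) (use P l in \<open>force simp add: \<alpha>_def\<close>)
    finally show ?thesis .
  qed
  have ortho2: "bf D n (e l) ej = 0" if l: "l < j" for l
    using ortho1[OF l] bf_sym[OF Dsym, of "e l" ej] by simp
  define xn where "xn i = (if i = j then 1 else 0) - (\<Sum>l<j. \<alpha> l * xs l i)" for i
  have ej_rep: "ej r = (\<Sum>i<n. xn i * p i r)" for r
  proof -
    have "(\<Sum>i<n. xn i * p i r) = (\<Sum>i<n. (if i = j then 1 else 0) * p i r) - (\<Sum>i<n. \<Sum>l<j. \<alpha> l * (xs l i * p i r))"
      unfolding xn_def by (simp add: left_diff_distrib sum_subtractf sum_distrib_right mult.assoc)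
    also have "(\<Sum>i<n. (if i = j then 1 else 0) * p i r) = (\<Sum>i<n. if i = j then p i r else 0)"
      by (rule sum.cong) auto
    also have "\<dots> = p j r" using jn by simp
    also have "(\<Sum>i<n. \<Sum>l<j. \<alpha> l * (xs l i * p i r)) = (\<Sum>l<j. \<alpha> l * (\<Sum>i<n. xs l i * p i r))"
      by (subst sum.swap) (simp add: sum_distrib_left)
    also have "\<dots> = (\<Sum>l<j. \<alpha> l * e l r)" using xs by (intro sum.cong) auto
    finally show ?thesis unfolding ej_def by simp
  qed
  have xn_j: "xn j = 1" unfolding xn_def using xs by simp
  have xn_gt: "xn i = 0" if "i > j" for i unfolding xn_def using xs that by simp
  have ej_nz: "\<exists>r<n. ej r \<noteq> 0"
  proof (rule ccontr)
    assume "\<not> ?thesis"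
    hence "\<forall>r<n. (\<Sum>i<n. xn i * p i r) = 0" using ej_rep by auto
    with hind jn have "xn j = 0" by blast
    with xn_j show False by simp
  qed
  have Pj: "bf D n ej ej > 0" using Dpos ej_nz by blast
  define \<beta> where "\<beta> l = (\<Sum>i<j. U i j * cs i l) - \<alpha> l * U l l + U j j * \<alpha> l" for l
  have key: "bf C n ej y - U j j * bf D n ej y = (\<Sum>l<j. \<beta> l * bf D n (e l) y)" for y
  proof -
    have c1: "bf C n ej y = bf C n (p j) y - (\<Sum>l<j. \<alpha> l * (U l l * bf D n (e l) y))"
      unfolding ej_fun using E by (simp add: bf_diff_left bf_sum_left)
    have c2: "bf C n (p j) y = U j j * bf D n (p j) y + (\<Sum>i<j. U i j * bf D n (p i) y)"
      using hAP jn by (simp add: lessThan_Suc_atMost[symmetric])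
    have c3: "(\<Sum>i<j. U i j * bf D n (p i) y) = (\<Sum>l<j. (\<Sum>i<j. U i j * cs i l) * bf D n (e l) y)"
    proof -
      have "(\<Sum>i<j. U i j * bf D n (p i) y) = (\<Sum>i<j. U i j * (\<Sum>l<j. cs i l * bf D n (e l) y))"
      proof (rule sum.cong[OF refl])
        fix i assume i: "i \<in> {..<j}"
        have "p i = (\<lambda>r. \<Sum>l<j. cs i l * e l r)" using cs i by auto
        then show "U i j * bf D n (p i) y = U i j * (\<Sum>l<j. cs i l * bf D n (e l) y)"
          by (simp add: bf_sum_left)
      qed
      also have "\<dots> = (\<Sum>l<j. (\<Sum>i<j. U i j * cs i l) * bf D n (e l) y)"
        by (simp add: sum_distrib_left sum_distrib_right mult.assoc) (rule sum.swap)
      finally show ?thesis .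
    qed
    have c4: "bf D n ej y = bf D n (p j) y - (\<Sum>l<j. \<alpha> l * bf D n (e l) y)"
      unfolding ej_fun by (simp add: bf_diff_left bf_sum_left)
    have r: "(\<Sum>l<j. \<beta> l * bf D n (e l) y) = (\<Sum>l<j. (\<Sum>i<j. U i j * cs i l) * bf D n (e l) y)
       - (\<Sum>l<j. \<alpha> l * (U l l * bf D n (e l) y)) + U j j * (\<Sum>l<j. \<alpha> l * bf D n (e l) y)"
    proof -
      have "(\<Sum>l<j. \<beta> l * bf D n (e l) y) = (\<Sum>l<j. (\<Sum>i<j. U i j * cs i l) * bf D n (e l) y
         - \<alpha> l * (U l l * bf D n (e l) y) + U j j * (\<alpha> l * bf D n (e l) y))"
        by (rule sum.cong) (simp_all add: \<beta>_def algebra_simps)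
      also have "\<dots> = (\<Sum>l<j. (\<Sum>i<j. U i j * cs i l) * bf D n (e l) y)
       - (\<Sum>l<j. \<alpha> l * (U l l * bf D n (e l) y)) + U j j * (\<Sum>l<j. \<alpha> l * bf D n (e l) y)"
        by (simp only: sum.distrib sum_subtractf sum_distrib_left)
      finally show ?thesis .
    qed
    show ?thesis
      unfolding c1 c2 c3 c4 r by (simp add: algebra_simps)
  qed
  have \<beta>0: "\<beta> l = 0" if l: "l < j" for l
  proof -
    have "bf C n ej (e l) - U j j * bf D n ej (e l) = bf C n (e l) ej"
      using ortho1[OF l] bf_sym[OF Csym, of ej "e l"] by simp
    also have "\<dots> = 0" using E l ortho2[OF l] by simp
    finally have "bf C n ej (e l) - U j j * bf D n ej (e l) = 0" .
    hence "(\<Sum>l'<j. \<beta> l' * bf D n (e l') (e l)) = 0" by (simp only: key)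
    moreover have "(\<Sum>l'<j. \<beta> l' * bf D n (e l') (e l)) = \<beta> l * bf D n (e l) (e l)"
      by (rule sum_single) (use l O in auto)
    ultimately have "\<beta> l * bf D n (e l) (e l) = 0" by simp
    moreover have "bf D n (e l) (e l) \<noteq> 0" using P l by (simp add: less_imp_neq[symmetric])
    ultimately show ?thesis by simp
  qed
  have Ej: "bf C n ej y = U j j * bf D n ej y" for y
  proof -
    have "(\<Sum>l<j. \<beta> l * bf D n (e l) y) = 0" using \<beta>0 by simp
    with key[of y] show ?thesis by simp
  qed
  show ?thesis
    unfolding GSinv_def
  proof (intro exI[of _ e'] conjI allI impI)
    fix l l' assume ll: "l < Suc j" "l' < Suc j" "l \<noteq> l'"
    then consider (a) "l < j" "l' < j" | (b) "l = j" "l' < j" | (c) "l < j" "l' = j"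
      unfolding less_Suc_eq by blast
    then show "bf D n (e' l) (e' l') = 0"
    proof cases
      case a then show ?thesis using O ll(3) by (simp add: e'_lt)
    next
      case b then show ?thesis using ortho1 by (simp add: e'_lt e'_j)
    next
      case c then show ?thesis using ortho2 by (simp add: e'_lt e'_j)
    qed
  next
    fix l assume "l < Suc j"
    then consider "l < j" | "l = j" unfolding less_Suc_eq by blast
    then show "bf D n (e' l) (e' l) > 0"
    proof cases
      case 1 then show ?thesis using P by (simp add: e'_lt)
    next
      case 2 then show ?thesis using Pj by (simp add: e'_j)
    qed
  next
    fix l y assume "l < Suc j"
    then consider "l < j" | "l = j" unfolding less_Suc_eq by blast
    then show "bf C n (e' l) y = U l l * bf D n (e' l) y"
    proof cases
      case 1 then show ?thesis using E by (simp add: e'_lt)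
    next
      case 2 then show ?thesis using Ej by (simp add: e'_j)
    qed
  next
    fix i assume i: "i < Suc j"
    show "\<exists>c. (\<forall>l>i. c l = 0) \<and> (\<forall>r. p i r = (\<Sum>l<Suc j. c l * e' l r))"
    proof (cases "i = j")
      case True
      define c where "c l = (if l = j then 1 else if l < j then \<alpha> l else 0)" for l
      have "p i r = (\<Sum>l<Suc j. c l * e' l r)" for r
      proof -
        have "(\<Sum>l<Suc j. c l * e' l r) = (\<Sum>l<j. c l * e' l r) + c j * e' j r"
          by simp
        also have "(\<Sum>l<j. c l * e' l r) = (\<Sum>l<j. \<alpha> l * e l r)"
          by (rule sum.cong) (auto simp: c_def e'_lt)
        also have "c j * e' j r = ej r" by (simp add: c_def e'_j)
        finally show ?thesis using True unfolding ej_def by simp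
      qed
      moreover have "\<forall>l>i. c l = 0" using True c_def by auto
      ultimately show ?thesis by blast
    next
      case False
      hence ij: "i < j" using i by simp
      have csz: "\<forall>l>i. cs i l = 0" and csr: "\<forall>r. p i r = (\<Sum>l<j. cs i l * e l r)" using cs ij by auto
      have "p i r = (\<Sum>l<Suc j. cs i l * e' l r)" for r
      proof -
        have "(\<Sum>l<Suc j. cs i l * e' l r) = (\<Sum>l<j. cs i l * e' l r) + cs i j * e' j r"
          by simp
        also have "cs i j = 0" using csz ij by simp
        also have "(\<Sum>l<j. cs i l * e' l r) = (\<Sum>l<j. cs i l * e l r)"
          by (rule sum.cong) (auto simp: e'_lt)
        finally show ?thesis using csr by simp
      qed
      then show ?thesis using csz by blast
    qed
  next
    fix l assume l: "l < Suc j"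
    show "\<exists>x. x l = 1 \<and> (\<forall>i>l. x i = 0) \<and> (\<forall>r. e' l r = (\<Sum>i<n. x i * p i r))"
    proof (cases "l = j")
      case True
      then show ?thesis using xn_j xn_gt ej_rep e'_j by (intro exI[of _ xn]) simp
    next
      case False
      hence lj: "l < j" using l by simp
      obtain x where "x = xs l" by simp
      then show ?thesis using xs lj e'_lt[OF lj] by (intro exI[of _ "xs l"]) simp
    qed
  qed
qed

lemma GS_all:
  assumes Csym: "\<forall>i<n. \<forall>j<n. C i j = C j i"
    and Dsym: "\<forall>i<n. \<forall>j<n. D i j = D j i"
    and Dpos: "\<forall>x. (\<exists>r<n. x r \<noteq> 0) \<longrightarrow> bf D n x x > 0"
    and hAP: "\<forall>j<n. \<forall>y. bf C n (p j) y = (\<Sum>i\<le>j. U i j * bf D n (p i) y)"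
    and hind: "\<forall>x. (\<forall>r<n. (\<Sum>i<n. x i * p i r) = 0) \<longrightarrow> (\<forall>i<n. x i = 0)"
  shows "j \<le> n \<Longrightarrow> \<exists>e. GSinv n C D p U j e"
proof (induction j)
  case 0
  show ?case unfolding GSinv_def by auto
next
  case (Suc j)
  then obtain e where "GSinv n C D p U j e" by auto
  from GS_step[OF assms _ this] Suc.prems show ?case by auto
qed

lemma quad_D:
  assumes L: "L \<subseteq> {..<n}"
    and O: "\<forall>l<n. \<forall>l'<n. l \<noteq> l' \<longrightarrow> bf D n (e l) (e l') = 0"
  shows "bf D n (\<lambda>s. \<Sum>l\<in>L. a l * e l s) (\<lambda>s. \<Sum>l\<in>L. a l * e l s) = (\<Sum>l\<in>L. (a l)\<^sup>2 * bf D n (e l) (e l))"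
proof -
  have fin: "finite L" using L finite_subset by blast
  have "bf D n (\<lambda>s. \<Sum>l\<in>L. a l * e l s) (\<lambda>s. \<Sum>l\<in>L. a l * e l s)
      = (\<Sum>l\<in>L. a l * (\<Sum>l'\<in>L. a l' * bf D n (e l) (e l')))"
    using fin by (simp add: bf_sum_left bf_sum_right)
  also have "\<dots> = (\<Sum>l\<in>L. a l * (a l * bf D n (e l) (e l)))"
  proof (rule sum.cong[OF refl])
    fix l assume l: "l \<in> L"
    have "(\<Sum>l'\<in>L. a l' * bf D n (e l) (e l')) = a l * bf D n (e l) (e l)"
      by (rule sum_single[OF fin l]) (use l L O in auto)
    then show "a l * (\<Sum>l'\<in>L. a l' * bf D n (e l) (e l')) = a l * (a l * bf D n (e l) (e l))" by simp
  qed
  finally show ?thesis by (simp add: power2_eq_square mult.assoc)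
qed

lemma quad_C:
  assumes L: "L \<subseteq> {..<n}"
    and O: "\<forall>l<n. \<forall>l'<n. l \<noteq> l' \<longrightarrow> bf D n (e l) (e l') = 0"
    and E: "\<forall>l<n. \<forall>y. bf C n (e l) y = \<mu> l * bf D n (e l) y"
  shows "bf C n (\<lambda>s. \<Sum>l\<in>L. a l * e l s) (\<lambda>s. \<Sum>l\<in>L. a l * e l s) = (\<Sum>l\<in>L. (a l)\<^sup>2 * \<mu> l * bf D n (e l) (e l))"
proof -
  have fin: "finite L" using L finite_subset by blast
  have "bf C n (\<lambda>s. \<Sum>l\<in>L. a l * e l s) (\<lambda>s. \<Sum>l\<in>L. a l * e l s)
      = (\<Sum>l\<in>L. a l * bf C n (e l) (\<lambda>s. \<Sum>l\<in>L. a l * e l s))"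
    using fin by (simp add: bf_sum_left)
  also have "\<dots> = (\<Sum>l\<in>L. a l * (\<mu> l * (\<Sum>l'\<in>L. a l' * bf D n (e l) (e l'))))"
  proof (rule sum.cong[OF refl])
    fix l assume l: "l \<in> L"
    have "bf C n (e l) (\<lambda>s. \<Sum>l\<in>L. a l * e l s) = \<mu> l * bf D n (e l) (\<lambda>s. \<Sum>l\<in>L. a l * e l s)"
      using E l L by auto
    then show "a l * bf C n (e l) (\<lambda>s. \<Sum>l\<in>L. a l * e l s) = a l * (\<mu> l * (\<Sum>l'\<in>L. a l' * bf D n (e l) (e l')))"
      using fin by (simp add: bf_sum_right)
  qed
  also have "\<dots> = (\<Sum>l\<in>L. a l * (\<mu> l * (a l * bf D n (e l) (e l))))"
  proof (rule sum.cong[OF refl])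
    fix l assume l: "l \<in> L"
    have "(\<Sum>l'\<in>L. a l' * bf D n (e l) (e l')) = a l * bf D n (e l) (e l)"
      by (rule sum_single[OF fin l]) (use l L O in auto)
    then show "a l * (\<mu> l * (\<Sum>l'\<in>L. a l' * bf D n (e l) (e l'))) = a l * (\<mu> l * (a l * bf D n (e l) (e l)))" by simp
  qed
  finally show ?thesis by (simp add: power2_eq_square mult.assoc mult.left_commute)
qed

lemma quad_neg:
  assumes L: "L \<subseteq> {..<n}"
    and O: "\<forall>l<n. \<forall>l'<n. l \<noteq> l' \<longrightarrow> bf D n (e l) (e l') = 0"
    and Pp: "\<forall>l<n. bf D n (e l) (e l) > 0"
    and E: "\<forall>l<n. \<forall>y. bf C n (e l) y = \<mu> l * bf D n (e l) y"
    and ht: "\<forall>l\<in>L. \<mu> l < t"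
    and nz: "\<exists>l\<in>L. a l \<noteq> 0"
  shows "bf C n (\<lambda>s. \<Sum>l\<in>L. a l * e l s) (\<lambda>s. \<Sum>l\<in>L. a l * e l s)
     - t * bf D n (\<lambda>s. \<Sum>l\<in>L. a l * e l s) (\<lambda>s. \<Sum>l\<in>L. a l * e l s) < 0"
proof -
  have fin: "finite L" using L finite_subset by blast
  have eq: "bf C n (\<lambda>s. \<Sum>l\<in>L. a l * e l s) (\<lambda>s. \<Sum>l\<in>L. a l * e l s)
     - t * bf D n (\<lambda>s. \<Sum>l\<in>L. a l * e l s) (\<lambda>s. \<Sum>l\<in>L. a l * e l s)
     = - (\<Sum>l\<in>L. (a l)\<^sup>2 * (t - \<mu> l) * bf D n (e l) (e l))"
    unfolding quad_C[OF L O E] quad_D[OF L O]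
    by (simp add: sum_distrib_left algebra_simps sum_subtractf sum_negf)
  obtain l0 where l0: "l0 \<in> L" "a l0 \<noteq> 0" using nz by blast
  have "0 < (\<Sum>l\<in>L. (a l)\<^sup>2 * (t - \<mu> l) * bf D n (e l) (e l))"
  proof (rule sum_pos2[OF fin l0(1)])
    show "0 < (a l0)\<^sup>2 * (t - \<mu> l0) * bf D n (e l0) (e l0)"
      using l0 ht Pp L by (intro mult_pos_pos) auto
    fix l assume "l \<in> L"
    then show "0 \<le> (a l)\<^sup>2 * (t - \<mu> l) * bf D n (e l) (e l)"
      using ht Pp L by (intro mult_nonneg_nonneg) (auto intro: less_imp_le)
  qed
  then show ?thesis unfolding eq by simp
qed

lemma bf_as_rows:
  assumes "\<forall>i<n. \<forall>j<n. C i j = C j i"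
  shows "bf C n x y = (\<Sum>b<n. (\<Sum>a<n. C b a * x a) * y b)"
proof -
  have "bf C n x y = (\<Sum>b<n. \<Sum>a<n. x a * C a b * y b)" unfolding bf_def by (rule sum.swap)
  also have "\<dots> = (\<Sum>b<n. \<Sum>a<n. C b a * x a * y b)"
    using assms by (intro sum.cong refl) (auto simp: mult.commute)
  also have "\<dots> = (\<Sum>b<n. (\<Sum>a<n. C b a * x a) * y b)" by (simp add: sum_distrib_right)
  finally show ?thesis .
qed

lemma posdef_bf:
  assumes "pos_def_mat n B" "\<exists>r<n. x r \<noteq> 0"
  shows "bf (\<lambda>i j. B $$ (i,j)) n x x > 0"
proof -
  have B: "B \<in> carrier_mat n n" using assms(1) unfolding pos_def_mat_def by auto
  have "vec n x \<noteq> 0\<^sub>v n" using assms(2) by (auto simp: vec_eq_iff)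
  then have "0 < vec n x \<bullet> (B *\<^sub>v vec n x)" using assms(1) unfolding pos_def_mat_def by auto
  also have "vec n x \<bullet> (B *\<^sub>v vec n x) = bf (\<lambda>i j. B $$ (i,j)) n x x"
    using B unfolding bf_def
    by (auto simp: scalar_prod_def row_def sum_distrib_left mult.assoc atLeast0LessThan intro!: sum.cong)
  finally show ?thesis .
qed

lemma schur_pencil:
  fixes A B :: "real mat"
  assumes A: "A \<in> carrier_mat n n"
    and Bpd: "pos_def_mat n B"
    and hdet: "\<forall>t. det (A - t \<cdot>\<^sub>m B) = det B * (\<Prod>k\<in>{1..n}. \<nu> k - t)"
  shows "\<exists>P U Q. P \<in> carrier_mat n n \<and> U \<in> carrier_mat n n \<and> Q \<in> carrier_mat n n \<and>
     A * P = B * P * U \<and> Q * P = 1\<^sub>m n \<and> P * Q = 1\<^sub>m n \<and>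
     (\<forall>i<n. \<forall>j<i. U $$ (i,j) = 0) \<and> (\<forall>i<n. U $$ (i,i) = \<nu> (Suc i))"
proof -
  have B: "B \<in> carrier_mat n n" using Bpd unfolding pos_def_mat_def by auto
  have dB: "det B \<noteq> 0"
  proof
    assume "det B = 0"
    then obtain x where x: "x \<in> carrier_vec n" "x \<noteq> 0\<^sub>v n" "B *\<^sub>v x = 0\<^sub>v n"
      using det_0_iff_vec_prod_zero[OF B] by auto
    then have "0 < x \<bullet> (B *\<^sub>v x)" using Bpd unfolding pos_def_mat_def by auto
    with x show False by simp
  qed
  from det_non_zero_imp_unit[OF B dB, of "()"]
  obtain Bi where Bi: "Bi \<in> carrier_mat n n" and BiB: "Bi * B = 1\<^sub>m n" and BBi: "B * Bi = 1\<^sub>m n"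
    unfolding Units_def ring_mat_def by auto
  define F where "F = Bi * A"
  have F: "F \<in> carrier_mat n n" unfolding F_def using Bi A by auto
  have BF: "B * F = A" unfolding F_def using B Bi A
    by (simp add: assoc_mult_mat[symmetric, of B n n Bi n A n] BBi)
  define es where "es = map \<nu> [1..<Suc n]"
  have cp: "char_poly F = (\<Prod>e\<leftarrow>es. [:- e, 1:])"
  proof (rule poly_eq_poly_eq_iff[THEN iffD1], rule ext)
    fix k :: real
    have cm: "char_matrix F k \<in> carrier_mat n n" using F by (simp add: char_matrix_def)
    have "B * (- char_matrix F k) = (-1) \<cdot>\<^sub>m (A - k \<cdot>\<^sub>m B)"
    proof -
      have "B * (- char_matrix F k) = - (B * char_matrix F k)"
        by (rule uminus_mult_right_mat) (use B cm in auto)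
      also have "B * char_matrix F k = B * F + B * ((- k) \<cdot>\<^sub>m 1\<^sub>m n)"
        unfolding char_matrix_def using F B by (simp add: mult_add_distrib_mat[of B n n])
      also have "B * ((- k) \<cdot>\<^sub>m 1\<^sub>m n) = (- k) \<cdot>\<^sub>m B"
        using B by (simp add: mult_smult_distrib[of B n n "1\<^sub>m n" n])
      finally show ?thesis unfolding BF using A B
        by (intro eq_matI) auto
    qed
    hence "det B * det (- char_matrix F k) = (-1) ^ n * det (A - k \<cdot>\<^sub>m B)"
      using A B cm by (simp add: det_mult[symmetric, of B n])
    also have "\<dots> = det B * ((-1) ^ n * (\<Prod>i\<in>{1..n}. \<nu> i - k))" using hdet by simp
    finally have "det (- char_matrix F k) = (-1) ^ n * (\<Prod>i\<in>{1..n}. \<nu> i - k)" using dB by simp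
    also have "\<dots> = (\<Prod>i\<in>{1..n}. k - \<nu> i)"
    proof -
      have "(\<Prod>i\<in>{1..n}. k - \<nu> i) = (\<Prod>i\<in>{1..n}. (-1) * (\<nu> i - k))" by (rule prod.cong) auto
      also have "\<dots> = (-1) ^ n * (\<Prod>i\<in>{1..n}. \<nu> i - k)" unfolding prod.distrib prod_constant by simp
      finally show ?thesis by simp
    qed
    also have "\<dots> = poly (\<Prod>e\<leftarrow>es. [:- e, 1:]) k"
    proof -
      have "poly (\<Prod>e\<leftarrow>es. [:- e, 1:]) k = (\<Prod>e\<leftarrow>es. k - e)"
        by (induction es) (auto simp: algebra_simps)
      also have "\<dots> = (\<Prod>i\<leftarrow>[1..<Suc n]. k - \<nu> i)" unfolding es_def by (simp add: comp_def)
      also have "\<dots> = (\<Prod>i\<in>{1..n}. k - \<nu> i)"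
      proof -
        have "(\<Prod>i\<leftarrow>[1..<Suc n]. k - \<nu> i) = (\<Prod>i\<in>set [1..<Suc n]. k - \<nu> i)"
          by (rule prod.distinct_set_conv_list[symmetric]) simp
        also have "set [1..<Suc n] = {1..n}" by auto
        finally show ?thesis .
      qed
      finally show ?thesis by simp
    qed
    finally show "poly (char_poly F) k = poly (\<Prod>e\<leftarrow>es. [:- e, 1:]) k"
      unfolding char_poly_matrix[OF F] .
  qed
  obtain U P Q where sd: "schur_decomposition F es = (U, P, Q)" by (cases "schur_decomposition F es") auto
  from schur_decomposition[OF F cp sd]
  have sim: "similar_mat_wit F U P Q" and ut: "upper_triangular U" and dg: "diag_mat U = es" by auto
  from sim F have U: "U \<in> carrier_mat n n" and P: "P \<in> carrier_mat n n" and Q: "Q \<in> carrier_mat n n"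
    and PQ: "P * Q = 1\<^sub>m n" and QP: "Q * P = 1\<^sub>m n" and FPUQ: "F = P * U * Q"
    unfolding similar_mat_wit_def Let_def by auto
  have FP: "F * P = P * U"
  proof -
    have "F * P = P * U * (Q * P)" unfolding FPUQ
      by (rule assoc_mult_mat[of "P * U" n n Q n P n]) (use P U Q in auto)
    also have "\<dots> = P * U" unfolding QP using P U by simp
    finally show ?thesis .
  qed
  have AP: "A * P = B * P * U"
  proof -
    have "A * P = B * (F * P)" unfolding BF[symmetric]
      by (rule assoc_mult_mat[of B n n F n P n]) (use B F P in auto)
    also have "\<dots> = B * P * U" unfolding FP
      by (rule assoc_mult_mat[of B n n P n U n, symmetric]) (use B U P in auto)
    finally show ?thesis .
  qed
  have diagU: "\<forall>i<n. U $$ (i,i) = \<nu> (Suc i)"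
  proof (intro allI impI)
    fix i assume i: "i < n"
    have "diag_mat U ! i = U $$ (i,i)" using U i unfolding diag_mat_def by auto
    also have "diag_mat U ! i = \<nu> (Suc i)" unfolding dg es_def using i by (simp del: upt_Suc)
    finally show "U $$ (i,i) = \<nu> (Suc i)" by simp
  qed
  have utU: "\<forall>i<n. \<forall>j<i. U $$ (i,j) = 0" using ut U unfolding upper_triangular_def by auto
  show ?thesis using P U Q AP QP PQ utU diagU by blast
qed

lemma mat_mult_entry:
  fixes X Y :: "real mat"
  assumes "X \<in> carrier_mat n n" "Y \<in> carrier_mat n n" "b < n" "j < n"
  shows "(X * Y) $$ (b,j) = (\<Sum>a<n. X $$ (b,a) * Y $$ (a,j))"
  using assms by (simp add: scalar_prod_def atLeast0LessThan)

lemma one_mat_sum: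
  assumes i: "i < n"
  shows "(\<Sum>i'<n. (1\<^sub>m n :: real mat) $$ (i,i') * x i') = x i"
proof -
  have "(\<Sum>i'<n. (1\<^sub>m n :: real mat) $$ (i,i') * x i') = (\<Sum>i'<n. if i' = i then x i' else 0)"
    by (rule sum.cong) (use i in auto)
  also have "\<dots> = x i" using i by simp
  finally show ?thesis .
qed

lemma eigbasis:
  fixes A B :: "real mat"
  assumes A: "A \<in> carrier_mat n n" and Asym: "\<forall>i<n. \<forall>j<n. A $$ (i,j) = A $$ (j,i)"
    and Bpd: "pos_def_mat n B"
    and hdet: "\<forall>t. det (A - t \<cdot>\<^sub>m B) = det B * (\<Prod>k\<in>{1..n}. \<nu> k - t)"
  shows "\<exists>e. (\<forall>l<n. \<forall>l'<n. l \<noteq> l' \<longrightarrow> bf (\<lambda>i j. B $$ (i,j)) n (e l) (e l') = 0) \<and>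
             (\<forall>l<n. bf (\<lambda>i j. B $$ (i,j)) n (e l) (e l) > 0) \<and>
             (\<forall>l<n. \<forall>y. bf (\<lambda>i j. A $$ (i,j)) n (e l) y = \<nu> (Suc l) * bf (\<lambda>i j. B $$ (i,j)) n (e l) y) \<and>
             (\<forall>z. \<exists>a. \<forall>r<n. z r = (\<Sum>l<n. a l * e l r))"
proof -
  obtain P U Q where P: "P \<in> carrier_mat n n" and U: "U \<in> carrier_mat n n" and Q: "Q \<in> carrier_mat n n"
    and AP: "A * P = B * P * U" and QP: "Q * P = 1\<^sub>m n" and PQ: "P * Q = 1\<^sub>m n"
    and utU: "\<forall>i<n. \<forall>j<i. U $$ (i,j) = 0" and dU: "\<forall>i<n. U $$ (i,i) = \<nu> (Suc i)"
    using schur_pencil[OF A Bpd hdet] by blast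
  have B: "B \<in> carrier_mat n n" and Bt: "transpose_mat B = B" using Bpd unfolding pos_def_mat_def by auto
  define Af where "Af i j = A $$ (i,j)" for i j
  define Bf where "Bf i j = B $$ (i,j)" for i j
  define p where "p j r = P $$ (r,j)" for j r
  define Uf where "Uf i j = U $$ (i,j)" for i j
  have Asym': "\<forall>i<n. \<forall>j<n. Af i j = Af j i" using Asym unfolding Af_def by auto
  have Bsym': "\<forall>i<n. \<forall>j<n. Bf i j = Bf j i"
  proof (intro allI impI)
    fix i j assume "i < n" "j < n"
    then have "transpose_mat B $$ (i,j) = B $$ (j,i)" using B by simp
    then show "Bf i j = Bf j i" unfolding Bf_def Bt by simp
  qed
  have Bpos: "\<forall>x. (\<exists>r<n. x r \<noteq> 0) \<longrightarrow> bf Bf n x x > 0"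
    using posdef_bf[OF Bpd] unfolding Bf_def by blast
  have BP: "B * P \<in> carrier_mat n n" using B P by simp
  have hAP: "\<forall>j<n. \<forall>y. bf Af n (p j) y = (\<Sum>i\<le>j. Uf i j * bf Bf n (p i) y)"
  proof (intro allI impI)
    fix j y assume j: "j < n"
    have "bf Af n (p j) y = (\<Sum>b<n. (A * P) $$ (b,j) * y b)"
      unfolding bf_as_rows[OF Asym'] using A P j by (intro sum.cong refl) (simp add: scalar_prod_def atLeast0LessThan Af_def p_def)
    also have "\<dots> = (\<Sum>b<n. (B * P * U) $$ (b,j) * y b)" unfolding AP ..
    also have "\<dots> = (\<Sum>b<n. (\<Sum>i<n. (B * P) $$ (b,i) * U $$ (i,j)) * y b)"
      using BP U j by (intro sum.cong refl) (subst mat_mult_entry[OF BP U], auto)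
    also have "\<dots> = (\<Sum>b<n. (\<Sum>i\<le>j. (B * P) $$ (b,i) * U $$ (i,j)) * y b)"
    proof -
      have "(\<Sum>i<n. (B * P) $$ (b,i) * U $$ (i,j)) = (\<Sum>i\<le>j. (B * P) $$ (b,i) * U $$ (i,j))" for b
        by (rule sum.mono_neutral_right) (use j utU in auto)
      then show ?thesis by simp
    qed
    also have "\<dots> = (\<Sum>i\<le>j. Uf i j * (\<Sum>b<n. (B * P) $$ (b,i) * y b))"
      by (simp add: sum_distrib_left sum_distrib_right Uf_def mult.commute mult.left_commute sum.swap[of _ "{..j}"])
    also have "\<dots> = (\<Sum>i\<le>j. Uf i j * bf Bf n (p i) y)"
    proof -
      have "(\<Sum>b<n. (B * P) $$ (b,i) * y b) = bf Bf n (p i) y" if "i \<in> {..j}" for i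
      proof -
        have i: "i < n" using j that by auto
        show ?thesis
          unfolding bf_as_rows[OF Bsym'] using B P i by (intro sum.cong refl) (simp add: scalar_prod_def atLeast0LessThan Bf_def p_def)
      qed
      then show ?thesis by (intro sum.cong refl) simp
    qed
    finally show "bf Af n (p j) y = (\<Sum>i\<le>j. Uf i j * bf Bf n (p i) y)" .
  qed
  have hind: "\<forall>x. (\<forall>r<n. (\<Sum>i<n. x i * p i r) = 0) \<longrightarrow> (\<forall>i<n. x i = 0)"
  proof (intro allI impI)
    fix x i assume h: "\<forall>r<n. (\<Sum>i<n. x i * p i r) = 0" and i: "i < n"
    have "x i = (\<Sum>i'<n. (Q * P) $$ (i,i') * x i')"
      unfolding QP using one_mat_sum[OF i] by simp
    also have "\<dots> = (\<Sum>i'<n. (\<Sum>r<n. Q $$ (i,r) * P $$ (r,i')) * x i')"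
      using Q P i by (intro sum.cong refl) (simp add: scalar_prod_def atLeast0LessThan)
    also have "\<dots> = (\<Sum>i'<n. \<Sum>r<n. Q $$ (i,r) * P $$ (r,i') * x i')"
      by (simp add: sum_distrib_right)
    also have "\<dots> = (\<Sum>r<n. \<Sum>i'<n. Q $$ (i,r) * P $$ (r,i') * x i')"
      by (rule sum.swap)
    also have "\<dots> = (\<Sum>r<n. Q $$ (i,r) * (\<Sum>i'<n. x i' * p i' r))"
      by (simp add: sum_distrib_left p_def mult.commute mult.left_commute)
    also have "\<dots> = 0" using h by simp
    finally show "x i = 0" .
  qed
  obtain e where inv: "GSinv n Af Bf p Uf n e" using GS_all[OF Asym' Bsym' Bpos hAP hind, of n] by auto
  note I = inv[unfolded GSinv_def]
  have O: "\<forall>l<n. \<forall>l'<n. l \<noteq> l' \<longrightarrow> bf Bf n (e l) (e l') = 0" using I by (elim conjE) assumption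
  have Pp: "\<forall>l<n. bf Bf n (e l) (e l) > 0" using I by (elim conjE) assumption
  have E: "\<forall>l<n. \<forall>y. bf Af n (e l) y = Uf l l * bf Bf n (e l) y" using I by (elim conjE) assumption
  have S: "\<forall>i<n. \<exists>c. (\<forall>l>i. c l = 0) \<and> (\<forall>r. p i r = (\<Sum>l<n. c l * e l r))" using I by (elim conjE) assumption
  have "\<forall>i. \<exists>c. i < n \<longrightarrow> (\<forall>r. p i r = (\<Sum>l<n. c l * e l r))" using S by metis
  from choice[OF this] obtain cs where cs: "\<forall>i<n. \<forall>r. p i r = (\<Sum>l<n. cs i l * e l r)" by blast
  have span: "\<exists>a. \<forall>r<n. z r = (\<Sum>l<n. a l * e l r)" for z
  proof -
    define wq where "wq i = (\<Sum>s<n. Q $$ (i,s) * z s)" for i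
    define a where "a l = (\<Sum>i<n. wq i * cs i l)" for l
    have "z r = (\<Sum>l<n. a l * e l r)" if r: "r < n" for r
    proof -
      have "z r = (\<Sum>s<n. (P * Q) $$ (r,s) * z s)"
        unfolding PQ using one_mat_sum[OF r] by simp
      also have "\<dots> = (\<Sum>s<n. (\<Sum>i<n. P $$ (r,i) * Q $$ (i,s)) * z s)"
        using Q P r by (intro sum.cong refl) (simp add: scalar_prod_def atLeast0LessThan)
      also have "\<dots> = (\<Sum>s<n. \<Sum>i<n. P $$ (r,i) * Q $$ (i,s) * z s)"
        by (simp add: sum_distrib_right)
      also have "\<dots> = (\<Sum>i<n. \<Sum>s<n. P $$ (r,i) * Q $$ (i,s) * z s)"
        by (rule sum.swap)
      also have "\<dots> = (\<Sum>i<n. wq i * p i r)"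
        by (simp add: wq_def sum_distrib_left sum_distrib_right p_def mult.commute mult.left_commute)
      also have "\<dots> = (\<Sum>i<n. wq i * (\<Sum>l<n. cs i l * e l r))"
        using cs by (intro sum.cong refl) auto
      also have "\<dots> = (\<Sum>i<n. \<Sum>l<n. wq i * cs i l * e l r)"
        by (simp add: sum_distrib_left mult.assoc)
      also have "\<dots> = (\<Sum>l<n. \<Sum>i<n. wq i * cs i l * e l r)"
        by (rule sum.swap)
      also have "\<dots> = (\<Sum>l<n. a l * e l r)"
        by (simp add: a_def sum_distrib_right)
      finally show ?thesis .
    qed
    then show ?thesis by blast
  qed
  show ?thesis
    using O Pp E span dU unfolding Af_def[abs_def] Bf_def[abs_def] Uf_def by (intro exI[of _ e]) auto
qed

lemma underdetermined:
  fixes c :: "nat \<Rightarrow> nat \<Rightarrow> real"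
  assumes k: "1 \<le> k"
  shows "\<exists>a. (\<exists>l<k. a l \<noteq> 0) \<and> (\<forall>r<k-1. (\<Sum>l<k. c r l * a l) = 0)"
proof -
  define G where "G = mat\<^sub>r k k (\<lambda>i. if i = k - 1 then 0\<^sub>v k else vec k (c i))"
  have G: "G \<in> carrier_mat k k" unfolding G_def by auto
  have "det G = 0" unfolding G_def
    by (rule det_row_0) (use k in auto)
  then obtain v where v: "v \<in> carrier_vec k" "v \<noteq> 0\<^sub>v k" "G *\<^sub>v v = 0\<^sub>v k"
    using det_0_iff_vec_prod_zero[OF G] by auto
  have "\<exists>l<k. v $ l \<noteq> 0"
  proof (rule ccontr)
    assume "\<not> ?thesis"
    then have "v = 0\<^sub>v k" using v(1) by (intro eq_vecI) auto
    with v(2) show False by simp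
  qed
  moreover have "(\<Sum>l<k. c r l * v $ l) = 0" if r: "r < k - 1" for r
  proof -
    have "(G *\<^sub>v v) $ r = 0" using v(3) r by simp
    moreover have "(G *\<^sub>v v) $ r = row G r \<bullet> v" using G r by simp
    moreover have "row G r = vec k (c r)" unfolding G_def using r by simp
    ultimately have "vec k (c r) \<bullet> v = 0" by simp
    then show ?thesis using v(1) by (simp add: scalar_prod_def atLeast0LessThan)
  qed
  ultimately show ?thesis by (intro exI[of _ "\<lambda>l. v $ l"]) auto
qed

lemma bil_left_sum:
  assumes "bilinear_form S"
  shows "S (\<Sum>l\<in>L. z l *\<^sub>R x l) u = (\<Sum>l\<in>L. z l * S (x l) u)"
proof -
  have lin: "linear (\<lambda>x. S x u)" using assms unfolding bilinear_form_def by blast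
  show ?thesis using linear_sum[OF lin, of "\<lambda>l. z l *\<^sub>R x l" L] linear_scale[OF lin] by simp
qed

lemma bil_right_sum:
  assumes "bilinear_form S"
  shows "S u (\<Sum>l\<in>L. z l *\<^sub>R x l) = (\<Sum>l\<in>L. z l * S u (x l))"
proof -
  have lin: "linear (\<lambda>y. S u y)" using assms unfolding bilinear_form_def by blast
  show ?thesis using linear_sum[OF lin, of "\<lambda>l. z l *\<^sub>R x l" L] linear_scale[OF lin] by simp
qed

lemma bil_diff:
  assumes "bilinear_form S"
  shows "S (x - y) u = S x u - S y u" "S u (x - y) = S u x - S u y"
proof -
  have lin1: "linear (\<lambda>x. S x u)" and lin2: "linear (\<lambda>y. S u y)" using assms unfolding bilinear_form_def by blast+
  show "S (x - y) u = S x u - S y u" using linear_diff[OF lin1] by simp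
  show "S u (x - y) = S u x - S u y" using linear_diff[OF lin2] by simp
qed

lemma bil_zero:
  assumes "bilinear_form S"
  shows "S 0 u = 0"
proof -
  have lin1: "linear (\<lambda>x. S x u)" using assms unfolding bilinear_form_def by blast
  show ?thesis using linear_0[OF lin1] by simp
qed

lemma bil_quad:
  assumes "bilinear_form S"
  shows "S (\<Sum>l<n. z l *\<^sub>R x l) (\<Sum>l<n. z l *\<^sub>R y l) = bf (\<lambda>i j. S (x i) (y j)) n z z"
  unfolding bil_left_sum[OF assms] bil_right_sum[OF assms] bf_def
  by (simp add: sum_distrib_left mult.commute mult.left_commute) (subst sum.swap, simp add: mult.commute mult.left_commute)

lemma bessel:
  fixes f :: "nat \<Rightarrow> 'a::real_vector"
  assumes bil: "bilinear_form S" and sym: "symmetric_form S" and psd: "\<forall>x. S x x \<ge> 0"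
    and on: "\<forall>i j. S (f i) (f j) = (if i = j then 1 else 0)"
  shows "(\<Sum>i<K. (S x (f i))\<^sup>2) \<le> S x x"
proof -
  define a where "a i = S x (f i)" for i
  define s where "s = (\<Sum>i<K. a i *\<^sub>R f i)"
  have sxs: "S x s = (\<Sum>i<K. (a i)\<^sup>2)" unfolding s_def bil_right_sum[OF bil]
    by (simp add: a_def power2_eq_square)
  have ssx: "S s x = (\<Sum>i<K. (a i)\<^sup>2)" using sxs sym unfolding symmetric_form_def by metis
  have sss: "S s s = (\<Sum>i<K. (a i)\<^sup>2)"
  proof -
    have "S s s = (\<Sum>i<K. a i * (\<Sum>j<K. a j * S (f j) (f i)))"
      unfolding s_def bil_left_sum[OF bil] bil_right_sum[OF bil] ..
    also have "\<dots> = (\<Sum>i<K. a i * a i)"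
    proof (rule sum.cong[OF refl])
      fix i assume i: "i \<in> {..<K}"
      have "(\<Sum>j<K. a j * S (f j) (f i)) = a i * S (f i) (f i)"
        by (rule sum_single[where l=i and f="\<lambda>j. a j * S (f j) (f i)"]) (use i on in auto)
      then show "a i * (\<Sum>j<K. a j * S (f j) (f i)) = a i * a i" using on by simp
    qed
    finally show ?thesis by (simp add: power2_eq_square)
  qed
  have "0 \<le> S (x - s) (x - s)" using psd by blast
  also have "S (x - s) (x - s) = S x x - S x s - S s x + S s s"
    unfolding bil_diff[OF bil] by simp
  finally show ?thesis unfolding sxs ssx sss a_def by simp
qed

lemma bf_lin3: "bf (\<lambda>i j. a * C1 i j + b * C2 i j + c * C3 i j) n x y = a * bf C1 n x y + b * bf C2 n x y + c * bf C3 n x y"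
  unfolding bf_def by (simp add: algebra_simps sum.distrib sum_distrib_left)

lemma bf_cong_C: "\<forall>i<n. \<forall>j<n. C i j = C' i j \<Longrightarrow> bf C n x y = bf C' n x y"
  unfolding bf_def by simp

lemma bf_cong_vec: "\<forall>r<n. x r = x' r \<Longrightarrow> \<forall>r<n. y r = y' r \<Longrightarrow> bf C n x y = bf C n x' y'"
  unfolding bf_def by simp

lemma bf_zero_left: "\<forall>r<n. x r = 0 \<Longrightarrow> bf C n x y = 0"
  unfolding bf_def by simp

theorem theorem4p4:
  fixes M N :: "'d::real_vector \<Rightarrow> 'd \<Rightarrow> real"
    and lam :: "nat \<Rightarrow> real" and phi :: "nat \<Rightarrow> 'd"
    and bG :: "'x::real_vector \<Rightarrow> 'x \<Rightarrow> real" and T :: "'d \<Rightarrow> 'x"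
    and n :: nat and v :: "nat \<Rightarrow> 'd" and w :: "nat \<Rightarrow> 'x"
    and \<rho> :: real and A0 A1 A2 A B :: "real mat" and \<nu> :: "nat \<Rightarrow> real" and q m :: nat
  assumes A1_M: "bilinear_form M" "symmetric_form M" "\<forall>u. u \<noteq> 0 \<longrightarrow> M u u > 0"
    and A1_N: "bilinear_form N" "symmetric_form N"
    and A2_mono: "\<forall>i\<ge>1. lam i \<le> lam (Suc i)"
    and A2_eig: "\<forall>i\<ge>1. \<forall>u. M (phi i) u = lam i * N (phi i) u"
    and A2_orth: "\<forall>i\<ge>1. \<forall>j\<ge>1. M (phi i) (phi j) = (if i = j then 1 else 0)"
    and A2_exp: "\<forall>u. (\<lambda>i. lam (Suc i) * \<bar>N u (phi (Suc i))\<bar>^2) sums N u u"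
    and A3_bG: "bilinear_form bG" "symmetric_form bG" "\<forall>x. bG x x \<ge> 0"
    and A3_T: "linear T" "\<forall>u u'. bG (T u) (T u') = M u u'"
    and A4: "\<forall>i\<in>{1..n}. \<forall>u. bG (w i) (T u) = N (v i) u"
    and A5_rho: "\<rho> > 0"
    and A5_A0: "A0 = mat n n (\<lambda>(i,j). M (v (Suc i)) (v (Suc j)))"
    and A5_A1: "A1 = mat n n (\<lambda>(i,j). N (v (Suc i)) (v (Suc j)))"
    and A5_A2: "A2 = mat n n (\<lambda>(i,j). bG (w (Suc i)) (w (Suc j)))"
    and A5_A: "A = A0 - \<rho> \<cdot>\<^sub>m A1"
    and A5_B: "B = A0 - (2 * \<rho>) \<cdot>\<^sub>m A1 + (\<rho>^2) \<cdot>\<^sub>m A2"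
    and A5_Bpd: "pos_def_mat n B"
    and A5_nu: "gen_eigenvalues_sorted n A B \<nu>"
    and A5_q: "q = card {k\<in>{1..n}. \<nu> k < 0}"
    and hm: "n \<le> m" "\<rho> \<le> lam (m + 1)"
  shows "(\<forall>k\<in>{1..q}. lam (m + 1 - k) \<ge> \<rho> - \<rho> / (1 - \<nu> k))
    \<and> (\<forall>Lam :: nat \<Rightarrow> real. n \<ge> 1 \<and> pos_def_mat n A1 \<and> gen_eigenvalues_sorted n A0 A1 Lam
          \<and> \<rho> > Lam n \<longrightarrow>
         \<nu> n < 0 \<and> q = n \<and> (\<forall>k\<in>{1..n}. lam (m + 1 - k) \<ge> \<rho> - \<rho> / (1 - \<nu> k)))"
proof -
  have Msym: "M x y = M y x" for x y using A1_M(2) unfolding symmetric_form_def by blast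
  have Nsym: "N x y = N y x" for x y using A1_N(2) unfolding symmetric_form_def by blast
  have Gsym: "bG x y = bG y x" for x y using A3_bG(2) unfolding symmetric_form_def by blast
  have Mpsd: "\<forall>x. M x x \<ge> 0"
  proof
    fix x show "M x x \<ge> 0"
    proof (cases "x = 0")
      case True then show ?thesis using bil_zero[OF A1_M(1)] by simp
    next
      case False then show ?thesis using A1_M(3) by (simp add: less_imp_le)
    qed
  qed
  define vz where "vz z = (\<Sum>l<n. z l *\<^sub>R v (Suc l))" for z :: "nat \<Rightarrow> real"
  define wz where "wz z = (\<Sum>l<n. z l *\<^sub>R w (Suc l))" for z :: "nat \<Rightarrow> real"
  have A0c: "A0 \<in> carrier_mat n n" and A1c: "A1 \<in> carrier_mat n n" and A2c: "A2 \<in> carrier_mat n n"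
    unfolding A5_A0 A5_A1 A5_A2 by auto
  have Ac: "A \<in> carrier_mat n n" unfolding A5_A using A0c A1c by auto
  have Aent: "\<forall>i<n. \<forall>j<n. A $$ (i,j) = 1 * M (v (Suc i)) (v (Suc j)) + (- \<rho>) * N (v (Suc i)) (v (Suc j))
      + 0 * bG (w (Suc i)) (w (Suc j))"
    unfolding A5_A A5_A0 A5_A1 by simp
  have Bent: "\<forall>i<n. \<forall>j<n. B $$ (i,j) = 1 * M (v (Suc i)) (v (Suc j)) + (- 2 * \<rho>) * N (v (Suc i)) (v (Suc j))
      + \<rho>^2 * bG (w (Suc i)) (w (Suc j))"
    unfolding A5_B A5_A0 A5_A1 A5_A2 by simp
  have quadA: "bf (\<lambda>i j. A $$ (i,j)) n z z = M (vz z) (vz z) - \<rho> * N (vz z) (vz z)" for z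
  proof -
    have "bf (\<lambda>i j. A $$ (i,j)) n z z = bf (\<lambda>i j. 1 * M (v (Suc i)) (v (Suc j)) + (- \<rho>) * N (v (Suc i)) (v (Suc j))
      + 0 * bG (w (Suc i)) (w (Suc j))) n z z"
      by (rule bf_cong_C) (use Aent in auto)
    also have "\<dots> = M (vz z) (vz z) - \<rho> * N (vz z) (vz z)"
      unfolding bf_lin3 vz_def bil_quad[OF A1_M(1)] bil_quad[OF A1_N(1)] by simp
    finally show ?thesis .
  qed
  have quadB: "bf (\<lambda>i j. B $$ (i,j)) n z z = M (vz z) (vz z) - 2 * \<rho> * N (vz z) (vz z) + \<rho>^2 * bG (wz z) (wz z)" for z
  proof -
    have "bf (\<lambda>i j. B $$ (i,j)) n z z = bf (\<lambda>i j. 1 * M (v (Suc i)) (v (Suc j)) + (- 2 * \<rho>) * N (v (Suc i)) (v (Suc j))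
      + \<rho>^2 * bG (w (Suc i)) (w (Suc j))) n z z"
      by (rule bf_cong_C) (use Bent in auto)
    also have "\<dots> = M (vz z) (vz z) - 2 * \<rho> * N (vz z) (vz z) + \<rho>^2 * bG (wz z) (wz z)"
      unfolding bf_lin3 vz_def wz_def bil_quad[OF A1_M(1)] bil_quad[OF A1_N(1)] bil_quad[OF A3_bG(1)] by simp
    finally show ?thesis .
  qed
  have Asym: "\<forall>i<n. \<forall>j<n. A $$ (i,j) = A $$ (j,i)" using Aent Msym Nsym Gsym by simp
  have nu_step: "\<forall>k\<in>{1..<n}. \<nu> k \<le> \<nu> (Suc k)" and hdet: "\<forall>t. det (A - t \<cdot>\<^sub>m B) = det B * (\<Prod>k\<in>{1..n}. \<nu> k - t)"
    using A5_nu unfolding gen_eigenvalues_sorted_def by auto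
  obtain e where eO: "\<forall>l<n. \<forall>l'<n. l \<noteq> l' \<longrightarrow> bf (\<lambda>i j. B $$ (i,j)) n (e l) (e l') = 0"
    and eP: "\<forall>l<n. bf (\<lambda>i j. B $$ (i,j)) n (e l) (e l) > 0"
    and eE: "\<forall>l<n. \<forall>y. bf (\<lambda>i j. A $$ (i,j)) n (e l) y = \<nu> (Suc l) * bf (\<lambda>i j. B $$ (i,j)) n (e l) y"
    using eigbasis[OF Ac Asym A5_Bpd hdet] by blast
  have lam_mono: "lam a \<le> lam b" if "1 \<le> a" "a \<le> b" for a b
    using that(2)
  proof (induction b rule: dec_induct)
    case base then show ?case by simp
  next
    case (step b) then show ?case using A2_mono that(1) by (meson order_trans le_trans)
  qed
  have nu_mono: "\<nu> a \<le> \<nu> b" if "1 \<le> a" "a \<le> b" "b \<le> n" for a b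
    using that(2,3)
  proof (induction b rule: dec_induct)
    case base then show ?case by simp
  next
    case (step b)
    then have "\<nu> b \<le> \<nu> (Suc b)" using nu_step that(1) by auto
    with step show ?case by simp
  qed
  have Nvz: "N (vz z) u = (\<Sum>s<n. z s * N (v (Suc s)) u)" for z u
    unfolding vz_def by (rule bil_left_sum[OF A1_N(1)])
  have Gwz: "bG (wz z) (T u) = N (vz z) u" for z u
  proof -
    have "bG (wz z) (T u) = (\<Sum>s<n. z s * bG (w (Suc s)) (T u))"
      unfolding wz_def by (rule bil_left_sum[OF A3_bG(1)])
    also have "\<dots> = (\<Sum>s<n. z s * N (v (Suc s)) u)"
      using A4 by (intro sum.cong refl) auto
    finally show ?thesis using Nvz by simp
  qed
  have main: "lam (m + 1 - k) \<ge> \<rho> - \<rho> / (1 - \<nu> k)" if k1: "1 \<le> k" and kn: "k \<le> n" and nuk: "\<nu> k < 0" for k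
  proof (rule ccontr)
    define L where "L = lam (m + 1 - k)"
    assume "\<not> ?thesis"
    then have hL: "L < \<rho> - \<rho> / (1 - \<nu> k)" unfolding L_def by simp
    have onu: "1 - \<nu> k > 0" using nuk by simp
    have rpos: "\<rho> / (1 - \<nu> k) > 0" using onu A5_rho by simp
    have Lr: "\<rho> - L > 0" using hL rpos by simp
    have nuk2: "\<nu> k < 1 - \<rho> / (\<rho> - L)"
    proof -
      have "\<rho> / (1 - \<nu> k) < \<rho> - L" using hL by simp
      then have "\<rho> < (\<rho> - L) * (1 - \<nu> k)" using onu by (simp add: pos_divide_less_eq mult.commute)
      then have "\<rho> / (\<rho> - L) < 1 - \<nu> k" using Lr by (simp add: pos_divide_less_eq mult.commute)
      then show ?thesis by simp
    qed
    define u where "u = 1 - \<rho> / (\<rho> - L)"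
    define t0 where "t0 = min u 0"
    define t where "t = (\<nu> k + t0) / 2"
    have t0: "\<nu> k < t0" unfolding t0_def using nuk nuk2 u_def by simp
    have t01: "t0 \<le> u" and t02: "t0 \<le> 0" unfolding t0_def by auto
    have tk: "\<nu> k < t" using t0 t01 t02 unfolding t_def by (simp add: field_simps)
    have tneg: "t < 0" using t0 t01 t02 unfolding t_def by (simp add: field_simps)
    have ttu: "t < u" using t0 t01 t02 unfolding t_def by (simp add: field_simps)
    then have tt: "t < 1 - \<rho> / (\<rho> - L)" unfolding u_def .
    have key_t: "(1 - t) * L + t * \<rho> < 0"
    proof -
      have "\<rho> / (\<rho> - L) < 1 - t" using tt by simp
      then have "\<rho> < (1 - t) * (\<rho> - L)" using Lr by (simp add: pos_divide_less_eq)
      then show ?thesis by (simp add: algebra_simps)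
    qed
    have ltk: "\<forall>l\<in>{..<k}. \<nu> (Suc l) < t"
    proof
      fix l assume "l \<in> {..<k}"
      then have "\<nu> (Suc l) \<le> \<nu> k" using nu_mono[of "Suc l" k] kn by auto
      then show "\<nu> (Suc l) < t" using tk by simp
    qed
    define idx where "idx r = m + 2 - k + r" for r
    define c where "c r l = (\<Sum>s<n. e l s * N (v (Suc s)) (phi (idx r)))" for r l
    obtain a where a_nz: "\<exists>l<k. a l \<noteq> 0" and a_c: "\<forall>r<k-1. (\<Sum>l<k. c r l * a l) = 0"
      using underdetermined[OF k1, of c] by blast
    define z where "z = (\<lambda>s. \<Sum>l\<in>{..<k}. a l * e l s)"
    have Lsub: "{..<k} \<subseteq> {..<n}" using kn by auto
    have zneg: "bf (\<lambda>i j. A $$ (i,j)) n z z - t * bf (\<lambda>i j. B $$ (i,j)) n z z < 0"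
      unfolding z_def by (rule quad_neg[OF Lsub eO eP eE ltk]) (use a_nz in auto)
    define x where "x = vz z"
    define y where "y = wz z"
    have Qneg: "(1 - t) * M x x - \<rho> * (1 - 2 * t) * N x x - t * \<rho>^2 * bG y y < 0"
      using zneg unfolding quadA quadB x_def y_def by (simp add: algebra_simps)
    have constr: "N x (phi (idx r)) = 0" if r: "r < k - 1" for r
    proof -
      have "N x (phi (idx r)) = (\<Sum>s<n. (\<Sum>l<k. a l * e l s) * N (v (Suc s)) (phi (idx r)))"
        unfolding x_def Nvz z_def by simp
      also have "\<dots> = (\<Sum>s<n. \<Sum>l<k. a l * (e l s * N (v (Suc s)) (phi (idx r))))"
        by (simp add: sum_distrib_right mult.assoc)
      also have "\<dots> = (\<Sum>l<k. \<Sum>s<n. a l * (e l s * N (v (Suc s)) (phi (idx r))))"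
        by (rule sum.swap)
      also have "\<dots> = (\<Sum>l<k. c r l * a l)"
        by (simp add: c_def sum_distrib_left mult.commute)
      also have "\<dots> = 0" using a_c r by simp
      finally show ?thesis .
    qed
    define cc where "cc i = N x (phi (Suc i))" for i
    have Mcc: "M x (phi (Suc i)) = lam (Suc i) * cc i" for i
    proof -
      have "M x (phi (Suc i)) = M (phi (Suc i)) x" by (rule Msym)
      also have "\<dots> = lam (Suc i) * N (phi (Suc i)) x" using A2_eig by simp
      finally show ?thesis unfolding cc_def using Nsym by metis
    qed
    have Gcc: "bG y (T (phi (Suc i))) = cc i" for i
      unfolding y_def cc_def x_def by (rule Gwz)
    have bes1: "(\<Sum>i<K. (lam (Suc i) * cc i)\<^sup>2) \<le> M x x" for K
    proof -
      have "(\<Sum>i<K. (M x (phi (Suc i)))\<^sup>2) \<le> M x x"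
        by (rule bessel[OF A1_M(1) A1_M(2) Mpsd]) (use A2_orth in auto)
      then show ?thesis unfolding Mcc .
    qed
    have bes2: "(\<Sum>i<K. (cc i)\<^sup>2) \<le> bG y y" for K
    proof -
      have "(\<Sum>i<K. (bG y (T (phi (Suc i))))\<^sup>2) \<le> bG y y"
        by (rule bessel[OF A3_bG(1) A3_bG(2) A3_bG(3)]) (use A3_T(2) A2_orth in auto)
      then show ?thesis unfolding Gcc .
    qed
    have hterm: "0 \<le> (cc i)\<^sup>2 * ((lam (Suc i) - \<rho>) * ((1 - t) * lam (Suc i) + t * \<rho>))" for i
    proof -
      consider (lo) "Suc i \<le> m + 1 - k" | (mid) "m + 1 - k < Suc i" "Suc i \<le> m" | (hi) "m + 1 \<le> Suc i"
        by linarith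
      then show ?thesis
      proof cases
        case lo
        then have le: "lam (Suc i) \<le> L" unfolding L_def by (intro lam_mono) auto
        have f1: "lam (Suc i) - \<rho> < 0" using le Lr by simp
        have "(1 - t) * lam (Suc i) \<le> (1 - t) * L" using le tneg by (intro mult_left_mono) auto
        then have f2: "(1 - t) * lam (Suc i) + t * \<rho> < 0" using key_t by simp
        have "0 \<le> (lam (Suc i) - \<rho>) * ((1 - t) * lam (Suc i) + t * \<rho>)"
          using f1 f2 by (simp add: mult_nonpos_nonpos less_imp_le)
        then show ?thesis by simp
      next
        case mid
        define r where "r = Suc i - (m + 2 - k)"
        have "idx r = Suc i" unfolding idx_def r_def using mid kn hm(1) by simp
        moreover have "r < k - 1" unfolding r_def using mid kn hm(1) k1 by simp
        ultimately have "cc i = 0" using constr unfolding cc_def by metis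
        then show ?thesis by simp
      next
        case hi
        then have ge: "\<rho> \<le> lam (Suc i)" using lam_mono[of "m + 1" "Suc i"] hm(2) by simp
        have "(1 - t) * \<rho> \<le> (1 - t) * lam (Suc i)" using ge tneg by (intro mult_left_mono) auto
        then have f2: "0 \<le> (1 - t) * lam (Suc i) + t * \<rho>" using A5_rho by (simp add: algebra_simps)
        have "0 \<le> (lam (Suc i) - \<rho>) * ((1 - t) * lam (Suc i) + t * \<rho>)"
          using ge f2 by simp
        then show ?thesis by simp
      qed
    qed
    have bound: "\<rho> * (1 - 2 * t) * ((\<Sum>i<K. lam (Suc i) * \<bar>cc i\<bar>^2) - N x x)
        \<le> (1 - t) * M x x - \<rho> * (1 - 2 * t) * N x x - t * \<rho>^2 * bG y y" for K
    proof -
      define S1 where "S1 = (\<Sum>i<K. (lam (Suc i) * cc i)\<^sup>2)"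
      define S2 where "S2 = (\<Sum>i<K. (cc i)\<^sup>2)"
      define SK where "SK = (\<Sum>i<K. lam (Suc i) * \<bar>cc i\<bar>^2)"
      have id: "(\<Sum>i<K. (cc i)\<^sup>2 * ((lam (Suc i) - \<rho>) * ((1 - t) * lam (Suc i) + t * \<rho>)))
          = (1 - t) * S1 - \<rho> * (1 - 2 * t) * SK - t * \<rho>^2 * S2"
      proof -
        have "(\<Sum>i<K. (cc i)\<^sup>2 * ((lam (Suc i) - \<rho>) * ((1 - t) * lam (Suc i) + t * \<rho>)))
          = (\<Sum>i<K. (1 - t) * (lam (Suc i) * cc i)\<^sup>2 - \<rho> * (1 - 2 * t) * (lam (Suc i) * \<bar>cc i\<bar>^2) - t * \<rho>^2 * (cc i)\<^sup>2)"
          by (rule sum.cong) (simp_all add: power2_eq_square algebra_simps)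
        also have "\<dots> = (1 - t) * S1 - \<rho> * (1 - 2 * t) * SK - t * \<rho>^2 * S2"
          unfolding S1_def S2_def SK_def by (simp add: sum_subtractf sum_distrib_left)
        finally show ?thesis .
      qed
      have "0 \<le> (\<Sum>i<K. (cc i)\<^sup>2 * ((lam (Suc i) - \<rho>) * ((1 - t) * lam (Suc i) + t * \<rho>)))"
        using hterm by (intro sum_nonneg) auto
      then have c0: "0 \<le> (1 - t) * S1 - \<rho> * (1 - 2 * t) * SK - t * \<rho>^2 * S2" using id by simp
      have c1: "(1 - t) * S1 \<le> (1 - t) * M x x" using bes1 tneg unfolding S1_def by (intro mult_left_mono) auto
      have tr: "0 \<le> - t * \<rho>^2" using tneg by (simp add: mult_nonpos_nonneg)
      have c2: "(- t * \<rho>^2) * S2 \<le> (- t * \<rho>^2) * bG y y" using bes2 tr unfolding S2_def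
        by (intro mult_left_mono) auto
      show ?thesis using c0 c1 c2 unfolding SK_def[symmetric] by (simp add: algebra_simps)
    qed
    have sm: "(\<lambda>i. lam (Suc i) * \<bar>cc i\<bar>^2) sums N x x" using A2_exp unfolding cc_def by blast
    have lim: "(\<lambda>K. \<rho> * (1 - 2 * t) * ((\<Sum>i<K. lam (Suc i) * \<bar>cc i\<bar>^2) - N x x)) \<longlonglongrightarrow> \<rho> * (1 - 2 * t) * (N x x - N x x)"
      using sm unfolding sums_def by (intro tendsto_intros)
    have "\<rho> * (1 - 2 * t) * (N x x - N x x) \<le> (1 - t) * M x x - \<rho> * (1 - 2 * t) * N x x - t * \<rho>^2 * bG y y"
      by (rule LIMSEQ_le_const2[OF lim]) (use bound in auto)
    with Qneg show False by simp
  qed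
  have qn: "q \<le> n"
  proof -
    have "q \<le> card {1..n}" unfolding A5_q by (rule card_mono) auto
    then show ?thesis by simp
  qed
  have negq: "\<nu> k < 0" if k: "k \<in> {1..q}" for k
  proof (rule ccontr)
    assume "\<not> \<nu> k < 0"
    then have nk: "\<nu> k \<ge> 0" by simp
    have "{j \<in> {1..n}. \<nu> j < 0} \<subseteq> {1..k-1}"
    proof
      fix j assume j: "j \<in> {j \<in> {1..n}. \<nu> j < 0}"
      have "j < k"
      proof (rule ccontr)
        assume "\<not> j < k"
        then have "\<nu> k \<le> \<nu> j" using nu_mono[of k j] k j by auto
        with nk j show False by simp
      qed
      then show "j \<in> {1..k-1}" using j by auto
    qed
    then have "q \<le> card {1..k-1}" unfolding A5_q by (rule card_mono[rotated]) auto
    then show False using k by (simp, arith)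
  qed
  have part1: "\<forall>k\<in>{1..q}. lam (m + 1 - k) \<ge> \<rho> - \<rho> / (1 - \<nu> k)"
    using main negq qn by fastforce
  have part2: "\<nu> n < 0 \<and> q = n \<and> (\<forall>k\<in>{1..n}. lam (m + 1 - k) \<ge> \<rho> - \<rho> / (1 - \<nu> k))"
    if h2: "n \<ge> 1" "pos_def_mat n A1" "gen_eigenvalues_sorted n A0 A1 Lam" "\<rho> > Lam n" for Lam
  proof -
    have Lam_step: "\<forall>k\<in>{1..<n}. Lam k \<le> Lam (Suc k)" and hdet0: "\<forall>t. det (A0 - t \<cdot>\<^sub>m A1) = det A1 * (\<Prod>k\<in>{1..n}. Lam k - t)"
      using h2(3) unfolding gen_eigenvalues_sorted_def by auto
    have Lam_mono: "Lam a \<le> Lam b" if "1 \<le> a" "a \<le> b" "b \<le> n" for a b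
      using that(2,3)
    proof (induction b rule: dec_induct)
      case base then show ?case by simp
    next
      case (step b)
      then have "Lam b \<le> Lam (Suc b)" using Lam_step that(1) by auto
      with step show ?case by simp
    qed
    have A0sym: "\<forall>i<n. \<forall>j<n. A0 $$ (i,j) = A0 $$ (j,i)" unfolding A5_A0 using Msym by simp
    obtain e' where e'O: "\<forall>l<n. \<forall>l'<n. l \<noteq> l' \<longrightarrow> bf (\<lambda>i j. A1 $$ (i,j)) n (e' l) (e' l') = 0"
      and e'P: "\<forall>l<n. bf (\<lambda>i j. A1 $$ (i,j)) n (e' l) (e' l) > 0"
      and e'E: "\<forall>l<n. \<forall>y. bf (\<lambda>i j. A0 $$ (i,j)) n (e' l) y = Lam (Suc l) * bf (\<lambda>i j. A1 $$ (i,j)) n (e' l) y"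
      and e'span: "\<forall>z. \<exists>a. \<forall>r<n. z r = (\<Sum>l<n. a l * e' l r)"
      using eigbasis[OF A0c A0sym h2(2) hdet0] by blast
    have Aneg: "bf (\<lambda>i j. A $$ (i,j)) n z z < 0" if nz: "\<exists>r<n. z r \<noteq> 0" for z
    proof -
      obtain a where a: "\<forall>r<n. z r = (\<Sum>l<n. a l * e' l r)" using e'span by blast
      define z' where "z' = (\<lambda>s. \<Sum>l\<in>{..<n}. a l * e' l s)"
      have anz: "\<exists>l\<in>{..<n}. a l \<noteq> 0"
      proof (rule ccontr)
        assume "\<not> ?thesis"
        then have "\<forall>r<n. z r = 0" using a by simp
        with nz show False by blast
      qed
      have ht: "\<forall>l\<in>{..<n}. Lam (Suc l) < \<rho>"
      proof
        fix l assume "l \<in> {..<n}"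
        then have "Lam (Suc l) \<le> Lam n" using Lam_mono[of "Suc l" n] by auto
        then show "Lam (Suc l) < \<rho>" using h2(4) by simp
      qed
      have "bf (\<lambda>i j. A $$ (i,j)) n z z = bf (\<lambda>i j. A $$ (i,j)) n z' z'"
        by (rule bf_cong_vec) (use a in \<open>auto simp: z'_def\<close>)
      also have "\<dots> = bf (\<lambda>i j. 1 * A0 $$ (i,j) + (- \<rho>) * A1 $$ (i,j) + 0 * A1 $$ (i,j)) n z' z'"
        by (rule bf_cong_C) (use A0c A1c in \<open>auto simp: A5_A\<close>)
      also have "\<dots> = bf (\<lambda>i j. A0 $$ (i,j)) n z' z' - \<rho> * bf (\<lambda>i j. A1 $$ (i,j)) n z' z'"
        unfolding bf_lin3 by simp
      also have "\<dots> < 0" unfolding z'_def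
        by (rule quad_neg[OF subset_refl e'O e'P e'E ht anz])
      finally show ?thesis .
    qed
    have n1: "Suc (n - 1) = n" using h2(1) by simp
    define ee where "ee = e (n - 1)"
    have eeE: "bf (\<lambda>i j. A $$ (i,j)) n ee ee = \<nu> n * bf (\<lambda>i j. B $$ (i,j)) n ee ee"
    proof -
      have nl: "n - 1 < n" using h2(1) by simp
      have "bf (\<lambda>i j. A $$ (i,j)) n ee ee = \<nu> (Suc (n - 1)) * bf (\<lambda>i j. B $$ (i,j)) n ee ee"
        using eE nl unfolding ee_def by blast
      then show ?thesis unfolding n1 .
    qed
    have eeP: "bf (\<lambda>i j. B $$ (i,j)) n ee ee > 0"
    proof -
      have nl: "n - 1 < n" using h2(1) by simp
      then show ?thesis using eP unfolding ee_def by blast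
    qed
    have eenz: "\<exists>r<n. ee r \<noteq> 0"
    proof (rule ccontr)
      assume "\<not> ?thesis"
      then have "bf (\<lambda>i j. B $$ (i,j)) n ee ee = 0" by (intro bf_zero_left) auto
      with eeP show False by simp
    qed
    have "\<nu> n * bf (\<lambda>i j. B $$ (i,j)) n ee ee < 0" using Aneg[OF eenz] eeE by simp
    then have nun: "\<nu> n < 0" using eeP by (simp add: mult_less_0_iff)
    have allneg: "\<nu> k < 0" if "k \<in> {1..n}" for k
      using nu_mono[of k n] that nun by auto
    have qeq: "q = n"
    proof -
      have "{k\<in>{1..n}. \<nu> k < 0} = {1..n}" using allneg by auto
      then show ?thesis unfolding A5_q by simp
    qed
    show ?thesis using nun qeq main allneg by auto
  qed
  show ?thesis using part1 part2 by blast
qed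

end
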